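(* Let $k,p>0$ be integers and let $U$ be a function assignment for $\mathbb{N}^k$. Then there exist a finite set $A\subseteq\mathbb{N}^k$ and a set $E\subseteq\mathbb{N}$ with $|E|=p$ and $E^k\subseteq A$ such that $U(A)$ has at most $k^k\,p$ regressive values on $E^k$.
   Context: $\mathbb{N}=\{0,1,2,\dots\}$. For $x\in\mathbb{N}^k$, $\min(x)$ is the minimum coordinate and $|x|$ the maximum coordinate of $x$. A function assignment for a set $S$ is a map $U$ assigning to each finite subset $A\subseteq S$ a function $U(A):A\to A$. For $B\subseteq\mathbb{N}^k$ and a function $F$ defined on $B$ with values in $\mathbb{N}^k$, $y$ is a regressive value of $F$ on $B$ iff there exists $x\in B$ with $F(x)=y$ and $|y|<\min(x)$. *)

theory Defs
  imports Main
begin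

definition Nk :: "nat \<Rightarrow> nat list set" where
  "Nk k = {x. length x = k}"

definition cube :: "nat set \<Rightarrow> nat \<Rightarrow> nat list set" where
  "cube E k = {x. length x = k \<and> set x \<subseteq> E}"

definition minc :: "nat list \<Rightarrow> nat" where
  "minc x = Min (set x)"

definition maxc :: "nat list \<Rightarrow> nat" where
  "maxc x = Max (set x)"

text \<open>U assigns to each finite subset A of S a function A -> A
  (values outside A are irrelevant).\<close>
definition function_assignment :: "'a set \<Rightarrow> ('a set \<Rightarrow> 'a \<Rightarrow> 'a) \<Rightarrow> bool" where
  "function_assignment S U \<longleftrightarrow>
     (\<forall>A. finite A \<and> A \<subseteq> S \<longrightarrow> (\<forall>x\<in>A. U A x \<in> A))"

definition regressive_values :: "(nat list \<Rightarrow> nat list) \<Rightarrow> nat list set \<Rightarrow> nat list set" where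
  "regressive_values F B = {y. \<exists>x\<in>B. F x = y \<and> maxc y < minc x}"

end

theory Submission imports Defs "HOL-Library.Ramsey" "HOL-Library.FuncSet" begin

definition rk :: "nat list \<Rightarrow> nat list" where
  "rk x = map (\<lambda>v. card {u \<in> set x. u < v}) x"

definition build :: "nat list \<Rightarrow> nat set \<Rightarrow> nat list" where
  "build \<rho> S = map (\<lambda>i. sorted_list_of_set S ! i) \<rho>"

lemma card_less_take:
  fixes xs :: "nat list"
  assumes "sorted_wrt (<) xs" "i < length xs"
  shows "card {u \<in> set xs. u < xs ! i} = (i::nat)"
proof -
  have "{u \<in> set xs. u < xs ! i} = set (take i xs)"
  proof
    show "{u \<in> set xs. u < xs ! i} \<subseteq> set (take i xs)"
    proof
      fix u assume "u \<in> {u \<in> set xs. u < xs ! i}"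
      then obtain j where j: "j < length xs" "xs ! j = u" "u < xs ! i" by (auto simp: in_set_conv_nth)
      have "j < i"
      proof (rule ccontr)
        assume "\<not> j < i"
        hence "i \<le> j" by simp
        hence "xs ! i \<le> xs ! j" using assms j
          using sorted_wrt_nth_less[OF assms(1), of i j] by (cases "i = j") auto
        thus False using j by simp
      qed
      thus "u \<in> set (take i xs)" using j by (metis in_set_conv_nth length_take min_less_iff_conj nth_take)
    qed
  next
    show "set (take i xs) \<subseteq> {u \<in> set xs. u < xs ! i}"
    proof
      fix u assume "u \<in> set (take i xs)"
      then obtain j where j: "j < i" "xs ! j = u" using assms(2) by (auto simp: in_set_conv_nth)
      thus "u \<in> {u \<in> set xs. u < xs ! i}" using assms sorted_wrt_nth_less
        by (metis (mono_tags, lifting) dual_order.strict_trans in_set_conv_nth mem_Collect_eq)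
    qed
  qed
  moreover have "distinct (take i xs)" using assms(1) by (simp add: strict_sorted_iff distinct_take)
  ultimately show ?thesis using assms(2) by (simp add: distinct_card)
qed

lemma nth_rank:
  assumes "finite S" "v \<in> S"
  shows "sorted_list_of_set S ! card {u \<in> S. u < v} = (v::nat)"
proof -
  let ?xs = "sorted_list_of_set S"
  have s: "sorted_wrt (<) ?xs" by simp
  have st: "set ?xs = S" using assms by simp
  obtain i where i: "i < length ?xs" "?xs ! i = v" using assms st by (metis in_set_conv_nth)
  have "card {u \<in> S. u < v} = i" using card_less_take[OF s i(1)] i st by simp
  thus ?thesis using i by simp
qed

lemma build_rk: "build (rk x) (set x) = x"
  unfolding build_def rk_def by (simp add: nth_rank map_idI)

lemma rk_less: "(v::nat) \<in> set x \<Longrightarrow> card {u \<in> set x. u < v} < card (set x)"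
proof (rule psubset_card_mono)
  assume "v \<in> set x"
  moreover have "v \<notin> {u \<in> set x. u < v}" by simp
  ultimately show "{u \<in> set x. u < v} \<subset> set x" by blast
qed simp

lemma rk_mem: "length x = k \<Longrightarrow> rk x \<in> {xs. set xs \<subseteq> {..<k} \<and> length xs = k}"
  unfolding rk_def using rk_less card_length[of x] by (auto, fastforce)

lemma card_set_rk: "card (set (rk x)) = card (set x)"
proof -
  let ?r = "\<lambda>v. card {u \<in> set x. u < v}"
  have "inj_on ?r (set x)"
  proof (rule inj_onI)
    fix a b assume ab: "a \<in> set x" "b \<in> set x" "?r a = ?r b"
    show "a = b"
    proof (rule ccontr)
      assume "a \<noteq> b"
      then consider "a < b" | "b < a" by linarith
      thus False
      proof cases
        case 1
        have "{u \<in> set x. u < a} \<subset> {u \<in> set x. u < b}" using 1 ab by auto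
        hence "?r a < ?r b" by (intro psubset_card_mono) auto
        thus False using ab by simp
      next
        case 2
        have "{u \<in> set x. u < b} \<subset> {u \<in> set x. u < a}" using 2 ab by auto
        hence "?r b < ?r a" by (intro psubset_card_mono) auto
        thus False using ab by simp
      qed
    qed
  qed
  thus ?thesis unfolding rk_def by (simp add: card_image)
qed


lemma ramsey_fin:
  fixes f :: "nat set \<Rightarrow> 'c"
  assumes "infinite Z" "finite C" "\<forall>X. X \<subseteq> Z \<and> finite X \<and> card X = r \<longrightarrow> f X \<in> C"
  shows "\<exists>Y \<subseteq> Z. infinite Y \<and> (\<forall>X X'. X \<subseteq> Y \<and> finite X \<and> card X = r \<and> X' \<subseteq> Y \<and> finite X' \<and> card X' = r \<longrightarrow> f X = f X')"
proof -
  obtain h where h: "bij_betw h C {0..<card C}" using ex_bij_betw_finite_nat[OF assms(2)] by blast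
  have "\<forall>X. X \<subseteq> Z \<and> finite X \<and> card X = r \<longrightarrow> (h \<circ> f) X < card C"
    using assms(3) h by (auto simp: bij_betw_def)
  from Ramsey[OF assms(1) this] obtain Y t where Y: "Y \<subseteq> Z" "infinite Y" "t < card C"
    "\<forall>X. X \<subseteq> Y \<and> finite X \<and> card X = r \<longrightarrow> (h \<circ> f) X = t" by blast
  show ?thesis
  proof (intro exI conjI allI impI)
    fix X X' assume XX: "X \<subseteq> Y \<and> finite X \<and> card X = r \<and> X' \<subseteq> Y \<and> finite X' \<and> card X' = r"
    have "f X \<in> C" "f X' \<in> C" using XX Y(1) assms(3) by auto
    moreover have "h (f X) = h (f X')" using XX Y(4) by auto
    ultimately show "f X = f X'" using h by (auto simp: bij_betw_def inj_on_def)
  qed (use Y in auto)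
qed

lemma ramsey_sizes:
  fixes f :: "nat \<Rightarrow> nat set \<Rightarrow> 'c"
  assumes "infinite Z" "\<forall>r<J. \<forall>X. X \<subseteq> Z \<and> finite X \<and> card X = r \<longrightarrow> f r X \<in> C r"
    "\<forall>r<J. finite (C r)"
  shows "\<exists>Y \<subseteq> Z. infinite Y \<and> (\<forall>r<J. \<forall>X X'. X \<subseteq> Y \<and> finite X \<and> card X = r \<and> X' \<subseteq> Y \<and> finite X' \<and> card X' = r \<longrightarrow> f r X = f r X')"
  using assms(2,3)
proof (induction J)
  case 0
  then show ?case using assms(1) by blast
next
  case (Suc J)
  then obtain Y where Y: "Y \<subseteq> Z" "infinite Y" "\<forall>r<J. \<forall>X X'. X \<subseteq> Y \<and> finite X \<and> card X = r \<and> X' \<subseteq> Y \<and> finite X' \<and> card X' = r \<longrightarrow> f r X = f r X'"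
    by auto
  have "\<forall>X. X \<subseteq> Y \<and> finite X \<and> card X = J \<longrightarrow> f J X \<in> C J" using Suc.prems Y(1) by blast
  from ramsey_fin[OF Y(2) _ this] Suc.prems obtain Y' where Y': "Y' \<subseteq> Y" "infinite Y'"
    "\<forall>X X'. X \<subseteq> Y' \<and> finite X \<and> card X = J \<and> X' \<subseteq> Y' \<and> finite X' \<and> card X' = J \<longrightarrow> f J X = f J X'"
    by auto
  show ?case
  proof (intro exI conjI allI impI)
    fix r X X' assume XX: "r < Suc J" "X \<subseteq> Y' \<and> finite X \<and> card X = r \<and> X' \<subseteq> Y' \<and> finite X' \<and> card X' = r"
    show "f r X = f r X'"
    proof (cases "r = J")
      case True
      have "X \<subseteq> Y' \<and> finite X \<and> card X = J \<and> X' \<subseteq> Y' \<and> finite X' \<and> card X' = J" using XX True by simp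
      then show ?thesis using Y'(3) True by blast
    next
      case False
      then have "r < J" using XX by simp
      moreover have "X \<subseteq> Y \<and> finite X \<and> card X = r \<and> X' \<subseteq> Y \<and> finite X' \<and> card X' = r" using XX Y'(1) by blast
      ultimately show ?thesis using Y(3) by blast
    qed
  qed (use Y Y' in auto)
qed

definition Rset :: "nat \<Rightarrow> nat list set" where
  "Rset k = {xs. set xs \<subseteq> {..<k} \<and> length xs = k}"

lemma finite_Rset: "finite (Rset k)"
  unfolding Rset_def by (rule finite_lists_length_eq) simp

lemma card_Rset: "card (Rset k) = k ^ k"
  unfolding Rset_def by (subst card_lists_length_eq) simp_all

lemma minc_in: "x \<noteq> [] \<Longrightarrow> minc x \<in> set x"
  unfolding minc_def by simp

lemma minc_le: "v \<in> set x \<Longrightarrow> minc x \<le> v"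
  unfolding minc_def by simp

lemma hom_step:
  fixes G :: "nat list \<Rightarrow> 'b"
  assumes "k > 0" "infinite X" "\<forall>x. length x = k \<longrightarrow> G x \<in> B (minc x)" "\<forall>e. finite (B e)"
  shows "\<exists>Y \<subseteq> X - {e}. infinite Y \<and> (\<forall>x x'. length x = k \<and> length x' = k \<and> set x \<subseteq> insert e Y
     \<and> set x' \<subseteq> insert e Y \<and> minc x = e \<and> minc x' = e \<and> rk x = rk x' \<longrightarrow> G x = G x')"
proof -
  define G' where "G' x = (if length x = k \<and> minc x = e then Some (G x) else None)" for x
  define f where "f r T = restrict (\<lambda>\<rho>. G' (build \<rho> (insert e T))) (Rset k)" for r :: nat and T
  define C where "C r = PiE (Rset k) (\<lambda>_. insert None (Some ` B e))" for r :: nat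
  have infZ: "infinite (X - {e})" using assms(2) by simp
  have G'mem: "\<forall>x. G' x \<in> insert None (Some ` B e)" using assms(3) by (auto simp: G'_def)
  have fm: "\<forall>r<k. \<forall>T. T \<subseteq> X - {e} \<and> finite T \<and> card T = r \<longrightarrow> f r T \<in> C r"
    unfolding f_def C_def restrict_PiE_iff using G'mem by blast
  have fin: "\<forall>r<k. finite (C r)" unfolding C_def using assms(4)
    by (auto intro!: finite_PiE finite_Rset)
  obtain Y where Y: "Y \<subseteq> X - {e}" "infinite Y"
    "\<forall>r<k. \<forall>T T'. T \<subseteq> Y \<and> finite T \<and> card T = r \<and> T' \<subseteq> Y \<and> finite T' \<and> card T' = r \<longrightarrow> f r T = f r T'"
    using ramsey_sizes[OF infZ fm fin] by blast
  show ?thesis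
  proof (intro exI conjI allI impI)
    fix x x' assume H: "length x = k \<and> length x' = k \<and> set x \<subseteq> insert e Y
     \<and> set x' \<subseteq> insert e Y \<and> minc x = e \<and> minc x' = e \<and> rk x = rk x'"
    have ne: "x \<noteq> []" "x' \<noteq> []" using H assms(1) by auto
    have ex: "e \<in> set x" "e \<in> set x'" using H minc_in[OF ne(1)] minc_in[OF ne(2)] by auto
    define T where "T = set x - {e}"
    define T' where "T' = set x' - {e}"
    have cT: "card T = card (set x) - 1" "card T' = card (set x') - 1"
      unfolding T_def T'_def using ex by auto
    have "card (set x) = card (set x')" using card_set_rk[of x] card_set_rk[of x'] H by simp
    hence cTT: "card T = card T'" using cT by simp
    have "card (set x) \<le> k" using card_length[of x] H by simp
    hence lt: "card T < k" using cT ex assms(1) by (simp add: card_gt_0_iff)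
    have TY: "T \<subseteq> Y" "T' \<subseteq> Y" using H unfolding T_def T'_def by auto
    have finT: "finite T" "finite T'" unfolding T_def T'_def by simp_all
    have "f (card T) T = f (card T) T'"
      by (rule Y(3)[rule_format]) (use lt TY cTT finT in auto)
    hence "f (card T) T (rk x) = f (card T) T' (rk x)" by simp
    moreover have "rk x \<in> Rset k" using rk_mem H unfolding Rset_def by blast
    ultimately have "G' (build (rk x) (insert e T)) = G' (build (rk x) (insert e T'))"
      unfolding f_def by simp
    moreover have "insert e T = set x" "insert e T' = set x'" using ex unfolding T_def T'_def by auto
    ultimately have "G' x = G' x'" using H build_rk[of x] build_rk[of x'] by simp
    thus "G x = G x'" using H unfolding G'_def by auto
  qed (use Y(1,2) in auto)
qed


lemma min_hom:
  fixes G :: "nat list \<Rightarrow> 'b"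
  assumes k: "k > 0" and GB: "\<forall>x. length x = k \<longrightarrow> G x \<in> B (minc x)" and fB: "\<forall>e. finite (B e)"
  shows "\<exists>es::nat\<Rightarrow>nat. strict_mono es \<and> (\<forall>x x'. x \<in> cube (range es) k \<and> x' \<in> cube (range es) k
            \<and> minc x = minc x' \<and> rk x = rk x' \<longrightarrow> G x = G x')"
proof -
  define P where "P e Y \<longleftrightarrow> (\<forall>x x'. length x = k \<and> length x' = k \<and> set x \<subseteq> insert e Y
     \<and> set x' \<subseteq> insert e Y \<and> minc x = e \<and> minc x' = e \<and> rk x = rk x' \<longrightarrow> G x = G x')" for e Y
  define lst where "lst X = (LEAST v::nat. v \<in> X)" for X
  define nxt where "nxt X = (SOME Y. Y \<subseteq> X - {lst X} \<and> infinite Y \<and> P (lst X) Y)" for X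
  have nxt: "nxt X \<subseteq> X - {lst X} \<and> infinite (nxt X) \<and> P (lst X) (nxt X)" if "infinite X" for X
  proof -
    have "\<exists>Y. Y \<subseteq> X - {lst X} \<and> infinite Y \<and> P (lst X) Y"
      using hom_step[OF k that GB fB, of "lst X"] unfolding P_def by blast
    thus ?thesis unfolding nxt_def by (rule someI_ex)
  qed
  define Xs where "Xs i = (nxt ^^ i) UNIV" for i
  have XsS: "Xs (Suc i) = nxt (Xs i)" for i unfolding Xs_def by simp
  have inf: "infinite (Xs i)" for i
  proof (induction i)
    case 0 then show ?case by (simp add: Xs_def)
  next
    case (Suc i) then show ?case using nxt XsS by simp
  qed
  define es where "es i = lst (Xs i)" for i
  have esin: "es i \<in> Xs i" for i
    unfolding es_def lst_def using inf[of i] by (metis LeastI finite.emptyI ex_in_conv)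
  have esle: "v \<in> Xs i \<Longrightarrow> es i \<le> v" for v i unfolding es_def lst_def by (rule Least_le)
  have sub1: "Xs (Suc i) \<subseteq> Xs i - {es i}" for i using nxt[OF inf[of i]] XsS es_def by simp
  have subd: "Xs (i + d) \<subseteq> Xs i" for i d
  proof (induction d)
    case 0 then show ?case by simp
  next
    case (Suc d) then show ?case using sub1[of "i + d"] by auto
  qed
  have sub: "i \<le> j \<Longrightarrow> Xs j \<subseteq> Xs i" for i j using subd[of i "j - i"] by simp
  have sm: "strict_mono es"
  unfolding strict_mono_Suc_iff
  proof
    fix i
    have "es (Suc i) \<in> Xs i - {es i}" using esin[of "Suc i"] sub1[of i] by blast
    thus "es i < es (Suc i)" using esle[of "es (Suc i)" i] by auto
  qed
  have PP: "P (es i) (Xs (Suc i))" for i using nxt[OF inf[of i]] XsS es_def by simp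
  have hom: "\<forall>x x'. x \<in> cube (range es) k \<and> x' \<in> cube (range es) k
            \<and> minc x = minc x' \<and> rk x = rk x' \<longrightarrow> G x = G x'"
  proof (intro allI impI)
    fix x x' assume H: "x \<in> cube (range es) k \<and> x' \<in> cube (range es) k \<and> minc x = minc x' \<and> rk x = rk x'"
    have lx: "length x = k" "length x' = k" "set x \<subseteq> range es" "set x' \<subseteq> range es"
      using H unfolding cube_def by auto
    have ne: "x \<noteq> []" using lx k by auto
    obtain i where i: "minc x = es i" using minc_in[OF ne] lx by blast
    have inS: "set z \<subseteq> insert (es i) (Xs (Suc i))" if zr: "set z \<subseteq> range es" "minc z = es i" for z
    proof
      fix v assume v: "v \<in> set z"
      then obtain j where j: "v = es j" using zr by blast
      have "es i \<le> es j" using minc_le[OF v] zr j by simp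
      hence "i \<le> j" using sm by (simp add: strict_mono_less_eq)
      then consider "j = i" | "Suc i \<le> j" by linarith
      thus "v \<in> insert (es i) (Xs (Suc i))"
      proof cases
        case 1 then show ?thesis using j by simp
      next
        case 2 then show ?thesis using j esin[of j] sub[OF 2] by auto
      qed
    qed
    have i': "minc x' = es i" using H i by simp
    have "set x \<subseteq> insert (es i) (Xs (Suc i))" using inS[OF lx(3) i] .
    moreover have "set x' \<subseteq> insert (es i) (Xs (Suc i))" using inS[OF lx(4) i'] .
    ultimately show "G x = G x'"
      using PP[of i, unfolded P_def, rule_format, of x x'] lx H i i' by blast
  qed
  show ?thesis using sm hom by blast
qed


lemma count_bound:
  fixes G :: "nat list \<Rightarrow> nat list option"
  assumes fE: "finite E" and cE: "card E = p" and k: "k > 0"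
    and hom: "\<forall>x x'. x \<in> cube E k \<and> x' \<in> cube E k \<and> minc x = minc x' \<and> rk x = rk x' \<longrightarrow> G x = G x'"
  shows "card {y. \<exists>x\<in>cube E k. G x = Some y} \<le> k ^ k * p"
proof -
  define h where "h = (\<lambda>(\<rho>, m). the (G (SOME x. x \<in> cube E k \<and> rk x = \<rho> \<and> minc x = m)))"
  have "{y. \<exists>x\<in>cube E k. G x = Some y} \<subseteq> h ` (Rset k \<times> E)"
  proof
    fix y assume "y \<in> {y. \<exists>x\<in>cube E k. G x = Some y}"
    then obtain x where x: "x \<in> cube E k" "G x = Some y" by blast
    have lx: "length x = k" "set x \<subseteq> E" using x unfolding cube_def by auto
    hence ne: "x \<noteq> []" using k by auto
    have mE: "minc x \<in> E" using minc_in[OF ne] lx by blast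
    have rR: "rk x \<in> Rset k" using rk_mem[OF lx(1)] unfolding Rset_def .
    define x0 where "x0 = (SOME x0. x0 \<in> cube E k \<and> rk x0 = rk x \<and> minc x0 = minc x)"
    have "x0 \<in> cube E k \<and> rk x0 = rk x \<and> minc x0 = minc x"
      unfolding x0_def by (rule someI[of _ x]) (use x in simp)
    hence "G x0 = G x" using hom x(1) by blast
    moreover have "h (rk x, minc x) = the (G x0)" unfolding h_def x0_def by simp
    ultimately have "h (rk x, minc x) = y" using x(2) by simp
    thus "y \<in> h ` (Rset k \<times> E)" using rR mE by force
  qed
  hence "card {y. \<exists>x\<in>cube E k. G x = Some y} \<le> card (h ` (Rset k \<times> E))"
    by (intro card_mono) (auto intro: finite_Rset fE)
  also have "\<dots> \<le> card (Rset k \<times> E)" by (rule card_image_le) (auto intro: finite_Rset fE)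
  also have "\<dots> = k ^ k * p" by (simp add: card_cartesian_product card_Rset cE)
  finally show ?thesis .
qed

lemma compact:
  fixes Gn :: "nat \<Rightarrow> nat list \<Rightarrow> 'b"
  assumes GB: "\<forall>n x. Gn n x \<in> B x" and fB: "\<forall>x. finite (B x)"
  shows "\<exists>G. \<forall>m. infinite {n. \<forall>x \<in> cube {..m} k. Gn n x = G x}"
proof -
  define D where "D m = cube {..m} k" for m
  have fD: "finite (D m)" for m unfolding D_def cube_def
    using finite_lists_length_eq[of "{..m}" k] by (simp add: conj_commute)
  define Q where "Q m M \<longleftrightarrow> (\<forall>n\<in>M. \<forall>n'\<in>M. \<forall>x\<in>D m. Gn n x = Gn n' x)" for m M
  define nxt where "nxt m N = (SOME M. M \<subseteq> N \<and> infinite M \<and> Q m M)" for m N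
  have nxt: "nxt m N \<subseteq> N \<and> infinite (nxt m N) \<and> Q m (nxt m N)" if infN: "infinite N" for m N
  proof -
    define r where "r n = restrict (Gn n) (D m)" for n
    have "r ` N \<subseteq> PiE (D m) B" unfolding r_def using GB by auto
    moreover have "finite (PiE (D m) B)" using fD fB by (intro finite_PiE) auto
    ultimately have "finite (r ` N)" by (rule finite_subset)
    then obtain y where y: "infinite (r -` {y} \<inter> N)" using inf_img_fin_dom'[OF _ infN] by blast
    have "Q m (r -` {y} \<inter> N)" unfolding Q_def
    proof (intro ballI)
      fix n n' x assume "n \<in> r -` {y} \<inter> N" "n' \<in> r -` {y} \<inter> N" "x \<in> D m"
      hence "r n x = r n' x" "x \<in> D m" by auto
      thus "Gn n x = Gn n' x" unfolding r_def by simp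
    qed
    hence "\<exists>M. M \<subseteq> N \<and> infinite M \<and> Q m M" using y by blast
    thus ?thesis unfolding nxt_def by (rule someI_ex)
  qed
  define Ns where "Ns m = rec_nat UNIV nxt m" for m
  have NsS: "Ns (Suc m) = nxt m (Ns m)" for m unfolding Ns_def by simp
  have inf: "infinite (Ns m)" for m
  proof (induction m)
    case 0 then show ?case by (simp add: Ns_def)
  next
    case (Suc m) then show ?case using nxt NsS by simp
  qed
  have sub1: "Ns (Suc m) \<subseteq> Ns m" for m using nxt[OF inf[of m]] NsS by simp
  have subd: "Ns (i + d) \<subseteq> Ns i" for i d
  proof (induction d)
    case 0 then show ?case by simp
  next
    case (Suc d) then show ?case using sub1[of "i + d"] by auto
  qed
  have sub: "i \<le> j \<Longrightarrow> Ns j \<subseteq> Ns i" for i j using subd[of i "j - i"] by simp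
  have QQ: "Q m (Ns (Suc m))" for m using nxt[OF inf[of m]] NsS by simp
  define ix where "ix x = (LEAST j. x \<in> D j)" for x
  define G where "G x = Gn (LEAST n. n \<in> Ns (Suc (ix x))) x" for x
  have "Ns (Suc m) \<subseteq> {n. \<forall>x \<in> cube {..m} k. Gn n x = G x}" for m
  proof (intro subsetI CollectI ballI)
    fix n x assume n: "n \<in> Ns (Suc m)" and x: "x \<in> cube {..m} k"
    have xD: "x \<in> D m" using x unfolding D_def .
    have j: "x \<in> D (ix x)" "ix x \<le> m" unfolding ix_def using xD by (auto intro: LeastI Least_le)
    have n': "n \<in> Ns (Suc (ix x))" using n sub[of "Suc (ix x)" "Suc m"] j by auto
    have "Ns (Suc (ix x)) \<noteq> {}" using inf[of "Suc (ix x)"] by auto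
    hence n0: "(LEAST n. n \<in> Ns (Suc (ix x))) \<in> Ns (Suc (ix x))" by (metis LeastI ex_in_conv)
    show "Gn n x = G x" unfolding G_def using QQ[of "ix x"] n' n0 j(1) unfolding Q_def by blast
  qed
  hence "infinite {n. \<forall>x \<in> cube {..m} k. Gn n x = G x}" for m
    using inf[of "Suc m"] finite_subset by blast
  thus ?thesis by blast
qed


theorem theorem0p6:
  fixes k p :: nat and U :: "nat list set \<Rightarrow> nat list \<Rightarrow> nat list"
  assumes "k > 0" and "p > 0"
    and "function_assignment (Nk k) U"
  shows "\<exists>A E. finite A \<and> A \<subseteq> Nk k \<and> card E = p \<and> cube E k \<subseteq> A \<and>
           card (regressive_values (U A) (cube E k)) \<le> k ^ k * p"
proof -
  note k = assms(1)
  define An where "An n = cube {..n} k" for n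
  have finA: "finite (An n)" for n unfolding An_def cube_def
    using finite_lists_length_eq[of "{..n}" k] by (simp add: conj_commute)
  have ANk: "An n \<subseteq> Nk k" for n unfolding An_def cube_def Nk_def by auto
  define F where "F n = U (An n)" for n
  have Fin: "x \<in> An n \<Longrightarrow> F n x \<in> An n" for n x
    using assms(3) finA ANk unfolding function_assignment_def F_def by blast
  define Gn where "Gn n x = (if x \<in> An n \<and> maxc (F n x) < minc x then Some (F n x) else None)" for n x
  define B where "B e = insert None (Some ` cube {..<e} k)" for e
  have fB: "\<forall>e. finite (B e)"
  proof
    fix e
    have "finite (cube {..<e} k)" unfolding cube_def
      using finite_lists_length_eq[of "{..<e}" k] by (simp add: conj_commute)
    thus "finite (B e)" unfolding B_def by simp
  qed
  have GnB: "\<forall>n x. Gn n x \<in> B (minc x)"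
  proof (intro allI)
    fix n x
    show "Gn n x \<in> B (minc x)"
    proof (cases "x \<in> An n \<and> maxc (F n x) < minc x")
      case True
      hence "F n x \<in> An n" using Fin by blast
      hence "length (F n x) = k" unfolding An_def cube_def by simp
      moreover have "set (F n x) \<subseteq> {..<minc x}"
      proof
        fix v assume "v \<in> set (F n x)"
        hence "v \<le> maxc (F n x)" unfolding maxc_def by simp
        thus "v \<in> {..<minc x}" using True by simp
      qed
      ultimately show ?thesis using True unfolding Gn_def B_def cube_def by simp
    qed (auto simp add: Gn_def B_def)
  qed
  obtain G where G: "\<forall>m. infinite {n. \<forall>x \<in> cube {..m} k. Gn n x = G x}"
    using compact[of Gn "\<lambda>x. B (minc x)" k] GnB fB by blast
  have GB: "\<forall>x. length x = k \<longrightarrow> G x \<in> B (minc x)"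
  proof (intro allI impI)
    fix x :: "nat list" assume lx: "length x = k"
    have "set x \<subseteq> {..sum_list x}" by (auto intro: member_le_sum_list)
    hence xc: "x \<in> cube {..sum_list x} k" unfolding cube_def using lx by simp
    have "{n. \<forall>x \<in> cube {..sum_list x} k. Gn n x = G x} \<noteq> {}"
      using G[rule_format, of "sum_list x"] by (intro notI) simp
    then obtain n where "n \<in> {n. \<forall>x \<in> cube {..sum_list x} k. Gn n x = G x}"
      by blast
    hence "Gn n x = G x" using xc by blast
    thus "G x \<in> B (minc x)" using GnB[rule_format, of n x] by simp
  qed
  obtain es :: "nat \<Rightarrow> nat" where sm: "strict_mono es" and hom:
    "\<forall>x x'. x \<in> cube (range es) k \<and> x' \<in> cube (range es) k
            \<and> minc x = minc x' \<and> rk x = rk x' \<longrightarrow> G x = G x'"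
    using min_hom[OF k GB fB] by blast
  define E where "E = es ` {..<p}"
  define m where "m = es (p - 1)"
  obtain n where nm: "n \<ge> m" and nG: "\<forall>x \<in> cube {..m} k. Gn n x = G x"
    using G[rule_format, of m] unfolding infinite_nat_iff_unbounded_le by blast
  have cardE: "card E = p" unfolding E_def
    using card_image[OF strict_mono_imp_inj_on[OF sm, of "{..<p}"]] by simp
  have Em: "E \<subseteq> {..m}" unfolding E_def m_def using sm assms(2)
    by (auto simp: strict_mono_less_eq)
  have cEm: "cube E k \<subseteq> cube {..m} k" using Em unfolding cube_def by auto
  have cEA: "cube E k \<subseteq> An n" using Em nm unfolding cube_def An_def by auto
  have rv: "regressive_values (U (An n)) (cube E k) = {y. \<exists>x\<in>cube E k. G x = Some y}"
  proof -
    have "Gn n x = (if maxc (F n x) < minc x then Some (F n x) else None)" if "x \<in> cube E k" for x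
      using cEA that unfolding Gn_def by auto
    moreover have "Gn n x = G x" if "x \<in> cube E k" for x using nG cEm that by blast
    ultimately show ?thesis unfolding regressive_values_def F_def
      by (auto split: if_splits)
  qed
  have homE: "\<forall>x x'. x \<in> cube E k \<and> x' \<in> cube E k \<and> minc x = minc x' \<and> rk x = rk x' \<longrightarrow> G x = G x'"
  proof -
    have "cube E k \<subseteq> cube (range es) k" unfolding E_def cube_def by auto
    thus ?thesis using hom by blast
  qed
  have "card (regressive_values (U (An n)) (cube E k)) \<le> k ^ k * p"
    unfolding rv using count_bound[OF _ cardE k homE] E_def by simp
  thus ?thesis using finA[of n] ANk[of n] cardE cEA by blast
qed

end
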